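(* For every set $A$, the lattice of all clones on $A$ (ordered by inclusion) is isomorphic to the lattice of all subalgebras of the full block algebra on $A$.
   Context: Finitary operations on $A$ include nullary ones (elements of $A$). A clone on $A$ is a set of finitary operations on $A$ that contains all projections $p^{(n)}_i(a_1,\dots,a_n)=a_i$, is closed under composition (if $f$ is $n$-ary and $g_1,\dots,g_n$ are $k$-ary in the set, $k\ge0$, then $\mathbf a\mapsto f(g_1(\mathbf a),\dots,g_n(\mathbf a))$ on $A^k$ is in the set) and under restriction (if an $n$-ary $f$, $n\ge1$, does not depend on its last argument, then the $(n-1)$-ary $g(a_1,\dots,a_{n-1})=f(a_1,\dots,a_{n-1},b)$ is in the set). Let $\omega=\{1,2,\dots\}$. The top extension of $f:A^n\to A$ is $f^\top:A^\omega\to A$, $f^\top(s)=f(s_1,\dots,s_n)$. The full block algebra on $A$ is the algebra with universe $\{f^\top: f\text{ a finitary operation on }A\}$, nullary operations $\mathsf e_i(s)=s_i$ ($i\ge 1$) and $(n+1)$-ary operations $q_n(\varphi,\psi_1,\dots,\psi_n)(s)=\varphi(s[\psi_1(s),\dots,\psi_n(s)])$ ($n\ge0$), where $s[b_1,\dots,b_n]$ replaces the first $n$ entries of $s$ by $b_1,\dots,b_n$. *)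

theory Defs
  imports Main
begin

text \<open>An n-ary operation is represented as a pair
  (n, f) with f :: 'a list => 'a mapping lists of length n over A into A, and
  extensional (value undefined) outside A^n. Nullary operations are included (n = 0).\<close>

definition tuples :: "'a set \<Rightarrow> nat \<Rightarrow> 'a list set" where
  "tuples A n = {xs. length xs = n \<and> set xs \<subseteq> A}"

definition ops :: "'a set \<Rightarrow> (nat \<times> ('a list \<Rightarrow> 'a)) set" where
  "ops A = {(n, f). (\<forall>xs \<in> tuples A n. f xs \<in> A) \<and>
                    (\<forall>xs. xs \<notin> tuples A n \<longrightarrow> f xs = undefined)}"

text \<open>Projection p^(n)_(i+1) (0-based index i < n).\<close>
definition proj :: "'a set \<Rightarrow> nat \<Rightarrow> nat \<Rightarrow> nat \<times> ('a list \<Rightarrow> 'a)" where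
  "proj A n i = (n, \<lambda>xs. if xs \<in> tuples A n then xs ! i else undefined)"

definition compose :: "'a set \<Rightarrow> nat \<times> ('a list \<Rightarrow> 'a) \<Rightarrow> (nat \<times> ('a list \<Rightarrow> 'a)) list
                        \<Rightarrow> nat \<Rightarrow> nat \<times> ('a list \<Rightarrow> 'a)" where
  "compose A f gs k = (k, \<lambda>xs. if xs \<in> tuples A k then snd f (map (\<lambda>g. snd g xs) gs) else undefined)"

definition is_clone :: "'a set \<Rightarrow> (nat \<times> ('a list \<Rightarrow> 'a)) set \<Rightarrow> bool" where
  "is_clone A C \<longleftrightarrow>
     C \<subseteq> ops A \<and>
     (\<forall>n i. i < n \<longrightarrow> proj A n i \<in> C) \<and>
     (\<forall>f \<in> C. \<forall>gs k. set gs \<subseteq> C \<and> length gs = fst f \<and> (\<forall>g \<in> set gs. fst g = k)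
                 \<longrightarrow> compose A f gs k \<in> C) \<and>
     (\<forall>n f. (Suc n, f) \<in> C \<and>
            (\<forall>xs \<in> tuples A n. \<forall>b \<in> A. \<forall>c \<in> A. f (xs @ [b]) = f (xs @ [c]))
            \<longrightarrow> (\<forall>b \<in> A. (n, \<lambda>xs. if xs \<in> tuples A n then f (xs @ [b]) else undefined) \<in> C))"

text \<open>The full block algebra. Sequences s in A^omega are represented 0-based:
  s_i (i >= 1) is s (i - 1). Elements are extensional functions on A^omega.\<close>

definition seqs :: "'a set \<Rightarrow> (nat \<Rightarrow> 'a) set" where
  "seqs A = {s. \<forall>i. s i \<in> A}"

definition top_ext :: "'a set \<Rightarrow> nat \<times> ('a list \<Rightarrow> 'a) \<Rightarrow> (nat \<Rightarrow> 'a) \<Rightarrow> 'a" where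
  "top_ext A f = (\<lambda>s. if s \<in> seqs A then snd f (map s [0..<fst f]) else undefined)"

definition block_univ :: "'a set \<Rightarrow> ((nat \<Rightarrow> 'a) \<Rightarrow> 'a) set" where
  "block_univ A = top_ext A ` ops A"

definition block_e :: "'a set \<Rightarrow> nat \<Rightarrow> (nat \<Rightarrow> 'a) \<Rightarrow> 'a" where
  "block_e A i = (\<lambda>s. if s \<in> seqs A then s (i - 1) else undefined)"

definition seq_replace :: "(nat \<Rightarrow> 'a) \<Rightarrow> 'a list \<Rightarrow> nat \<Rightarrow> 'a" where
  "seq_replace s bs = (\<lambda>j. if j < length bs then bs ! j else s j)"

text \<open>q_n(phi, psi_1, ..., psi_n) with n = length psis.\<close>
definition block_q :: "'a set \<Rightarrow> ((nat \<Rightarrow> 'a) \<Rightarrow> 'a) \<Rightarrow> ((nat \<Rightarrow> 'a) \<Rightarrow> 'a) list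
                       \<Rightarrow> (nat \<Rightarrow> 'a) \<Rightarrow> 'a" where
  "block_q A \<phi> \<psi>s = (\<lambda>s. if s \<in> seqs A then \<phi> (seq_replace s (map (\<lambda>\<psi>. \<psi> s) \<psi>s)) else undefined)"

definition is_block_subalg :: "'a set \<Rightarrow> ((nat \<Rightarrow> 'a) \<Rightarrow> 'a) set \<Rightarrow> bool" where
  "is_block_subalg A B \<longleftrightarrow>
     B \<subseteq> block_univ A \<and>
     (\<forall>i \<ge> 1. block_e A i \<in> B) \<and>
     (\<forall>\<phi> \<in> B. \<forall>\<psi>s. set \<psi>s \<subseteq> B \<longrightarrow> block_q A \<phi> \<psi>s \<in> B)"

end

theory Submission
  imports Defs
begin

lemma ops_mem: "(n,f) \<in> ops A \<Longrightarrow> xs \<in> tuples A n \<Longrightarrow> f xs \<in> A"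
  unfolding ops_def by auto

lemma ops_out: "(n,f) \<in> ops A \<Longrightarrow> xs \<notin> tuples A n \<Longrightarrow> f xs = undefined"
  unfolding ops_def by auto

lemma map_seq_tuples: "s \<in> seqs A \<Longrightarrow> map s [0..<n] \<in> tuples A n"
  unfolding seqs_def tuples_def by auto

lemma top_ext_pair: "top_ext A (n,f) s = (if s \<in> seqs A then f (map s [0..<n]) else undefined)"
  unfolding top_ext_def by simp

definition xseq :: "'a list \<Rightarrow> 'a \<Rightarrow> nat \<Rightarrow> 'a" where
  "xseq xs a = (\<lambda>j. if j < length xs then xs ! j else a)"

lemma xseq_seqs: "xs \<in> tuples A k \<Longrightarrow> a \<in> A \<Longrightarrow> xseq xs a \<in> seqs A"
  unfolding xseq_def seqs_def tuples_def by (auto dest: nth_mem)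

lemma map_xseq: "j \<le> length xs \<Longrightarrow> map (xseq xs a) [0..<j] = take j xs"
  by (rule nth_equalityI) (auto simp: xseq_def)

lemma map_nth_take: "m \<le> length xs \<Longrightarrow> map (\<lambda>i. xs ! i) [0..<m] = take m xs"
  by (rule nth_equalityI) auto

lemma tuples_len: "xs \<in> tuples A k \<Longrightarrow> length xs = k"
  unfolding tuples_def by auto

lemma te_eq:
  assumes te: "top_ext A (n,f) = top_ext A (m,g)" and nm: "n \<le> m" and a: "a \<in> A"
    and xs: "xs \<in> tuples A m"
  shows "g xs = f (take n xs)"
proof -
  have s: "xseq xs a \<in> seqs A" by (rule xseq_seqs[OF xs a])
  have l: "length xs = m" by (rule tuples_len[OF xs])
  have "top_ext A (n,f) (xseq xs a) = top_ext A (m,g) (xseq xs a)" unfolding te ..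
  moreover have "top_ext A (n,f) (xseq xs a) = f (take n xs)"
    unfolding top_ext_pair using s map_xseq[of n xs a] nm l by simp
  moreover have "top_ext A (m,g) (xseq xs a) = g xs"
    unfolding top_ext_pair using s map_xseq[of m xs a] l by simp
  ultimately show ?thesis by simp
qed

lemma te_same:
  assumes "(n,f) \<in> ops A" "(n,g) \<in> ops A" "top_ext A (n,f) = top_ext A (n,g)" "a \<in> A"
  shows "f = g"
proof
  fix xs show "f xs = g xs"
  proof (cases "xs \<in> tuples A n")
    case True
    have "g xs = f (take n xs)" by (rule te_eq[OF assms(3) le_refl assms(4) True])
    then show ?thesis using tuples_len[OF True] by simp
  next
    case False
    show ?thesis using ops_out[OF assms(1) False] ops_out[OF assms(2) False] by simp
  qed
qed

lemma proj_ops: "i < n \<Longrightarrow> proj A n i \<in> ops A"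
  unfolding proj_def ops_def tuples_def by auto

lemma top_ext_proj: "i < n \<Longrightarrow> top_ext A (proj A n i) = block_e A (Suc i)"
  by (rule ext) (auto simp: proj_def top_ext_pair block_e_def map_seq_tuples)

definition lift :: "'a set \<Rightarrow> nat \<times> ('a list \<Rightarrow> 'a) \<Rightarrow> nat \<Rightarrow> nat \<times> ('a list \<Rightarrow> 'a)" where
  "lift A g K = compose A g (map (proj A K) [0..<fst g]) K"

lemma lift_eq: "fst g \<le> K \<Longrightarrow>
  lift A g K = (K, \<lambda>xs. if xs \<in> tuples A K then snd g (take (fst g) xs) else undefined)"
  unfolding lift_def compose_def
  by (auto simp: proj_def comp_def map_nth_take tuples_len intro!: ext)

lemma lift_eq2: "m \<le> K \<Longrightarrow>
  lift A (m,g) K = (K, \<lambda>xs. if xs \<in> tuples A K then g (take m xs) else undefined)"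
  unfolding lift_def compose_def
  by (auto simp: proj_def comp_def map_nth_take tuples_len intro!: ext)

lemma top_ext_in: "g \<in> ops A \<Longrightarrow> s \<in> seqs A \<Longrightarrow> top_ext A g s \<in> A"
  by (cases g) (auto simp: top_ext_pair intro: ops_mem map_seq_tuples)

lemma ops_mem': "g \<in> ops A \<Longrightarrow> fst g = k \<Longrightarrow> xs \<in> tuples A k \<Longrightarrow> snd g xs \<in> A"
  by (cases g) (auto intro: ops_mem)

lemma seq_replace_seqs: "s \<in> seqs A \<Longrightarrow> set bs \<subseteq> A \<Longrightarrow> seq_replace s bs \<in> seqs A"
  unfolding seqs_def seq_replace_def by (auto dest: nth_mem)

lemma take_map_upt: "m \<le> K \<Longrightarrow> take m (map s [0..<K]) = map s [0..<m]"
  by (simp add: take_map)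

lemma clone_ops: "is_clone A C \<Longrightarrow> C \<subseteq> ops A"
  unfolding is_clone_def by auto

lemma clone_proj: "is_clone A C \<Longrightarrow> i < n \<Longrightarrow> proj A n i \<in> C"
  unfolding is_clone_def by auto

lemma clone_comp: "is_clone A C \<Longrightarrow> f \<in> C \<Longrightarrow> set gs \<subseteq> C \<Longrightarrow> length gs = fst f \<Longrightarrow>
   (\<forall>g \<in> set gs. fst g = k) \<Longrightarrow> compose A f gs k \<in> C"
  unfolding is_clone_def by blast

lemma clone_restr: "is_clone A C \<Longrightarrow> (Suc n, f) \<in> C \<Longrightarrow>
   (\<forall>xs \<in> tuples A n. \<forall>b \<in> A. \<forall>c \<in> A. f (xs @ [b]) = f (xs @ [c])) \<Longrightarrow> b \<in> A \<Longrightarrow>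
   (n, \<lambda>xs. if xs \<in> tuples A n then f (xs @ [b]) else undefined) \<in> C"
  unfolding is_clone_def by blast

lemma lift_in:
  assumes C: "is_clone A C" and g: "g \<in> C" and gK: "fst g \<le> K"
  shows "lift A g K \<in> C"
proof -
  have "set (map (proj A K) [0..<fst g]) \<subseteq> C" using clone_proj[OF C] gK by auto
  moreover have "length (map (proj A K) [0..<fst g]) = fst g" by simp
  moreover have "\<forall>p \<in> set (map (proj A K) [0..<fst g]). fst p = K" by (auto simp: proj_def)
  ultimately show ?thesis unfolding lift_def by (rule clone_comp[OF C g])
qed

lemma clone_up:
  assumes C: "is_clone A C" and g: "(m,g) \<in> C" and f: "(n,f) \<in> ops A" and mn: "m \<le> n"
    and te: "top_ext A (n,f) = top_ext A (m,g)" and a: "a \<in> A"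
  shows "(n,f) \<in> C"
proof -
  have "lift A (m,g) n \<in> C" using lift_in[OF C g] mn by simp
  moreover have "lift A (m,g) n = (n,f)"
  proof -
    have "f = (\<lambda>xs. if xs \<in> tuples A n then g (take m xs) else undefined)"
    proof
      fix xs show "f xs = (if xs \<in> tuples A n then g (take m xs) else undefined)"
      proof (cases "xs \<in> tuples A n")
        case True
        then show ?thesis using te_eq[OF te[symmetric] mn a True] by simp
      next
        case False then show ?thesis using ops_out[OF f] by simp
      qed
    qed
    then show ?thesis using mn by (simp add: lift_eq2)
  qed
  ultimately show ?thesis by simp
qed

lemma clone_down:
  assumes C: "is_clone A C" and f: "(n,f) \<in> ops A" and a: "a \<in> A"
  shows "\<forall>g. (n+d, g) \<in> C \<longrightarrow> top_ext A (n+d,g) = top_ext A (n,f) \<longrightarrow> (n,f) \<in> C"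
proof (induction d)
  case 0
  show ?case
  proof (intro allI impI)
    fix g assume g: "(n+0, g) \<in> C" and te: "top_ext A (n+0,g) = top_ext A (n,f)"
    have "(n,g) \<in> ops A" using g clone_ops[OF C] by auto
    then have "g = f" using te_same[OF _ f _ a] te by simp
    then show "(n,f) \<in> C" using g by simp
  qed
next
  case (Suc d)
  show ?case
  proof (intro allI impI)
    fix g assume g: "(n + Suc d, g) \<in> C" and te: "top_ext A (n + Suc d,g) = top_ext A (n,f)"
    have g': "(Suc (n+d), g) \<in> C" using g by simp
    have te': "top_ext A (n,f) = top_ext A (Suc (n+d),g)" using te by simp
    have key: "g (xs @ [b]) = f (take n xs)" if xs: "xs \<in> tuples A (n+d)" and b: "b \<in> A" for xs b
    proof -
      have "xs @ [b] \<in> tuples A (Suc (n+d))" using xs b by (auto simp: tuples_def)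
      from te_eq[OF te' _ a this] have "g (xs @ [b]) = f (take n (xs @ [b]))" by simp
      then show ?thesis using tuples_len[OF xs] by simp
    qed
    have indep: "\<forall>xs \<in> tuples A (n+d). \<forall>b \<in> A. \<forall>c \<in> A. g (xs @ [b]) = g (xs @ [c])"
      using key by simp
    define r where "r = (\<lambda>xs. if xs \<in> tuples A (n+d) then g (xs @ [a]) else undefined)"
    have rC: "(n+d, r) \<in> C" unfolding r_def using clone_restr[OF C g' indep a] .
    have "top_ext A (n+d, r) = top_ext A (n,f)"
    proof
      fix s show "top_ext A (n+d, r) s = top_ext A (n,f) s"
      proof (cases "s \<in> seqs A")
        case True
        have t: "map s [0..<n+d] \<in> tuples A (n+d)" using map_seq_tuples[OF True] .
        have "take n (map s [0..<n+d]) = map s [0..<n]" by (simp add: take_map)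
        then show ?thesis using True t key[OF t a] by (simp add: top_ext_pair r_def)
      next
        case False then show ?thesis by (simp add: top_ext_pair)
      qed
    qed
    then show "(n,f) \<in> C" using Suc rC by blast
  qed
qed

lemma proj_empty: "0 < n \<Longrightarrow> proj {} n 0 = (n, \<lambda>_. undefined)"
  unfolding proj_def tuples_def by (auto intro!: ext)

lemma clone_closed:
  assumes C: "is_clone A C" and c: "c \<in> C" and f: "f \<in> ops A" and te: "top_ext A f = top_ext A c"
  shows "f \<in> C"
proof (cases "A = {}")
  case True
  obtain n f' where fe: "f = (n, f')" by (cases f)
  have "n \<noteq> 0"
  proof
    assume "n = 0"
    then have "[] \<in> tuples A n" by (simp add: tuples_def)
    then show False using ops_mem f fe True by fastforce
  qed
  moreover have "f' = (\<lambda>_. undefined)"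
  proof
    fix xs have "xs \<notin> tuples A n" using \<open>n \<noteq> 0\<close> True by (auto simp: tuples_def)
    then show "f' xs = undefined" using ops_out f fe by metis
  qed
  ultimately have "f = proj A n 0" using True fe by (simp add: proj_empty)
  then show ?thesis using clone_proj[OF C] \<open>n \<noteq> 0\<close> by simp
next
  case False
  then obtain a where a: "a \<in> A" by blast
  obtain n f' where fe: "f = (n, f')" by (cases f)
  obtain m g where ce: "c = (m, g)" by (cases c)
  show ?thesis
  proof (cases "m \<le> n")
    case True
    then show ?thesis using clone_up[OF C _ _ True _ a] c f te fe ce by simp
  next
    case False
    obtain d where "m = n + d" using le_Suc_ex[of n m] False by force
    have fo: "(n,f') \<in> ops A" using f fe by simp
    show ?thesis using clone_down[OF C fo a, of d] c te fe ce \<open>m = n + d\<close> by simp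
  qed
qed


lemma list_lift: "set ys \<subseteq> h ` S \<Longrightarrow> \<exists>xs. ys = map h xs \<and> set xs \<subseteq> S"
proof (induction ys)
  case Nil then show ?case by simp
next
  case (Cons y ys)
  then obtain xs where xs: "ys = map h xs" "set xs \<subseteq> S" by auto
  from Cons.prems obtain x where "x \<in> S" "y = h x" by auto
  then show ?case using xs by (intro exI[of _ "x # xs"]) auto
qed

lemma q_closed:
  assumes C: "is_clone A C" and f: "(n,f) \<in> C" and gs: "set gs \<subseteq> C"
  shows "block_q A (top_ext A (n,f)) (map (top_ext A) gs) \<in> top_ext A ` C"
proof -
  define L where "L = length gs"
  define K where "K = n + L + sum_list (map fst gs)"
  define u where "u = (\<lambda>j. if j < L then lift A (gs!j) K else proj A K j)"
  define R where "R = compose A (n,f) (map u [0..<n]) K"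
  have fstle: "fst (gs!j) \<le> K" if "j < L" for j
  proof -
    have "fst (gs!j) \<in> set (map fst gs)" using that L_def by auto
    then have "fst (gs!j) \<le> sum_list (map fst gs)" by (rule member_le_sum_list) simp
    then show ?thesis unfolding K_def by simp
  qed
  have gsC: "gs!j \<in> C" if "j < L" for j using that gs L_def by (auto dest: nth_mem)
  have uC: "u j \<in> C" if "j < n" for j
    using that lift_in[OF C gsC fstle] clone_proj[OF C, of j K] by (auto simp: u_def K_def)
  have uK: "fst (u j) = K" if "j < n" for j
    using that fstle by (auto simp: u_def lift_def compose_def proj_def)
  have sC: "set (map u [0..<n]) \<subseteq> C" using uC by auto
  have RC: "R \<in> C" unfolding R_def
    using clone_comp[OF C f sC] uK by auto
  have teR: "top_ext A R = block_q A (top_ext A (n,f)) (map (top_ext A) gs)"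
  proof
    fix s show "top_ext A R s = block_q A (top_ext A (n,f)) (map (top_ext A) gs) s"
    proof (cases "s \<in> seqs A")
      case False then show ?thesis
        by (simp add: top_ext_def block_q_def R_def compose_def)
    next
      case True
      define xs where "xs = map s [0..<K]"
      have xsT: "xs \<in> tuples A K" unfolding xs_def using map_seq_tuples[OF True] .
      define bs where "bs = map (\<lambda>\<psi>. \<psi> s) (map (top_ext A) gs)"
      have gsops: "gs!j \<in> ops A" if "j < L" for j using gsC[OF that] clone_ops[OF C] by auto
      have bsA: "set bs \<subseteq> A"
      proof
        fix b assume "b \<in> set bs"
        then obtain g where "g \<in> set gs" "b = top_ext A g s" unfolding bs_def by auto
        then show "b \<in> A" using top_ext_in[OF _ True, of g] gs clone_ops[OF C] by auto
      qed
      have srS: "seq_replace s bs \<in> seqs A" using seq_replace_seqs[OF True bsA] .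
      have lhs: "top_ext A R s = f (map (\<lambda>j. snd (u j) xs) [0..<n])"
        using True xsT by (simp add: top_ext_def R_def compose_def xs_def comp_def)
      have rhs: "block_q A (top_ext A (n,f)) (map (top_ext A) gs) s = f (map (seq_replace s bs) [0..<n])"
        using True srS by (simp add: block_q_def top_ext_pair bs_def)
      have meq: "map (\<lambda>j. snd (u j) xs) [0..<n] = map (seq_replace s bs) [0..<n]"
      proof (rule map_cong[OF refl])
        fix j assume "j \<in> set [0..<n]"
        then have jn: "j < n" by simp
        show "snd (u j) xs = seq_replace s bs j"
        proof (cases "j < L")
          case True
          have l: "length bs = L" by (simp add: bs_def L_def)
          have "snd (u j) xs = snd (gs!j) (take (fst (gs!j)) xs)"
            using True fstle[OF True] xsT by (simp add: u_def lift_eq)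
          also have "\<dots> = snd (gs!j) (map s [0..<fst (gs!j)])"
            using fstle[OF True] by (simp add: xs_def take_map_upt)
          also have "\<dots> = seq_replace s bs j"
            using True l \<open>s \<in> seqs A\<close> by (simp add: seq_replace_def bs_def L_def top_ext_def)
          finally show ?thesis .
        next
          case False
          have l: "length bs = L" by (simp add: bs_def L_def)
          have jK: "j < K" using jn K_def by simp
          show ?thesis using False xsT l jK
            by (simp add: u_def proj_def seq_replace_def xs_def)
        qed
      qed
      show ?thesis by (simp only: lhs rhs meq)
    qed
  qed
  show ?thesis unfolding teR[symmetric] by (rule imageI[OF RC])
qed

lemma h_subalg:
  assumes C: "is_clone A C"
  shows "is_block_subalg A (top_ext A ` C)"
  unfolding is_block_subalg_def
proof (intro conjI allI impI ballI)
  show "top_ext A ` C \<subseteq> block_univ A" using clone_ops[OF C] unfolding block_univ_def by (rule image_mono)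
next
  fix i :: nat assume i1: "1 \<le> i"
  have si: "Suc (i - 1) = i" using i1 by simp
  have eq: "block_e A i = top_ext A (proj A i (i - 1))"
    using top_ext_proj[of "i - 1" i A] i1 unfolding si by simp
  have pC: "proj A i (i - 1) \<in> C" using clone_proj[OF C, of "i - 1" i] i1 by simp
  show "block_e A i \<in> top_ext A ` C" unfolding eq by (rule imageI[OF pC])
next
  fix \<phi> \<psi>s assume phi: "\<phi> \<in> top_ext A ` C" and psi: "set \<psi>s \<subseteq> top_ext A ` C"
  from phi obtain F where F1: "\<phi> = top_ext A F" and F2: "F \<in> C" by (rule imageE)
  obtain n f where Fe: "F = (n,f)" by (cases F)
  obtain gs where gs: "\<psi>s = map (top_ext A) gs" "set gs \<subseteq> C" using list_lift[OF psi] by blast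
  have nf: "(n,f) \<in> C" using F2 unfolding Fe .
  show "block_q A \<phi> \<psi>s \<in> top_ext A ` C"
    unfolding F1 Fe gs(1) by (rule q_closed[OF C nf gs(2)])
qed

lemma compose_ops:
  assumes f: "(n,f) \<in> ops A" and gs: "set gs \<subseteq> ops A" and l: "length gs = n"
    and k: "\<forall>g \<in> set gs. fst g = k"
  shows "compose A (n,f) gs k \<in> ops A"
proof -
  have "f (map (\<lambda>g. snd g xs) gs) \<in> A" if xs: "xs \<in> tuples A k" for xs
  proof -
    have "map (\<lambda>g. snd g xs) gs \<in> tuples A n"
      using l gs k xs by (auto simp: tuples_def[of A n] intro!: ops_mem')
    then show ?thesis using ops_mem[OF f] by blast
  qed
  then show ?thesis unfolding compose_def ops_def by auto
qed

lemma top_ext_compose: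
  assumes gs: "set gs \<subseteq> ops A" and l: "length gs = n" and k: "\<forall>g \<in> set gs. fst g = k"
  shows "top_ext A (compose A (n,f) gs k) = block_q A (top_ext A (n,f)) (map (top_ext A) gs)"
proof
  fix s show "top_ext A (compose A (n,f) gs k) s = block_q A (top_ext A (n,f)) (map (top_ext A) gs) s"
  proof (cases "s \<in> seqs A")
    case False then show ?thesis by (simp add: top_ext_def block_q_def compose_def)
  next
    case True
    define xs where "xs = map s [0..<k]"
    have xsT: "xs \<in> tuples A k" unfolding xs_def using map_seq_tuples[OF True] .
    define bs where "bs = map (\<lambda>\<psi>. \<psi> s) (map (top_ext A) gs)"
    have bs2: "bs = map (\<lambda>g. snd g xs) gs"
      unfolding bs_def xs_def using k True by (auto simp: top_ext_def)
    have bsA: "set bs \<subseteq> A" unfolding bs_def using gs top_ext_in[OF _ True] by auto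
    have srS: "seq_replace s bs \<in> seqs A" using seq_replace_seqs[OF True bsA] .
    have lb: "length bs = n" using l by (simp add: bs_def)
    have m: "map (seq_replace s bs) [0..<n] = bs"
      by (rule nth_equalityI) (auto simp: lb seq_replace_def)
    have "block_q A (top_ext A (n,f)) (map (top_ext A) gs) s = f bs"
      using True srS m by (simp add: block_q_def top_ext_pair bs_def)
    moreover have "top_ext A (compose A (n,f) gs k) s = f (map (\<lambda>g. snd g xs) gs)"
      using True xsT by (simp add: top_ext_def compose_def xs_def)
    ultimately show ?thesis using bs2 by simp
  qed
qed

lemma g_clone:
  assumes B: "is_block_subalg A B"
  shows "is_clone A {f \<in> ops A. top_ext A f \<in> B}"
  unfolding is_clone_def
proof (intro conjI allI impI ballI)
  show "{f \<in> ops A. top_ext A f \<in> B} \<subseteq> ops A" by auto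
next
  fix n i :: nat assume "i < n"
  moreover have "block_e A (Suc i) \<in> B" using B by (simp add: is_block_subalg_def)
  moreover have "proj A n i \<in> ops A" by (rule proj_ops[OF \<open>i < n\<close>])
  moreover have "top_ext A (proj A n i) = block_e A (Suc i)" by (rule top_ext_proj[OF \<open>i < n\<close>])
  ultimately show "proj A n i \<in> {f \<in> ops A. top_ext A f \<in> B}" by simp
next
  fix F gs k
  assume F: "F \<in> {f \<in> ops A. top_ext A f \<in> B}"
    and H: "set gs \<subseteq> {f \<in> ops A. top_ext A f \<in> B} \<and> length gs = fst F \<and> (\<forall>g\<in>set gs. fst g = k)"
  obtain n f where Fe: "F = (n,f)" by (cases F)
  have gsops: "set gs \<subseteq> ops A" using H by auto
  have l: "length gs = n" using H Fe by simp
  have kk: "\<forall>g\<in>set gs. fst g = k" using H by simp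
  have "compose A (n,f) gs k \<in> ops A" using compose_ops[OF _ gsops l kk] F Fe by simp
  moreover have "set (map (top_ext A) gs) \<subseteq> B" using H by auto
  then have "block_q A (top_ext A (n,f)) (map (top_ext A) gs) \<in> B"
    using B F Fe by (auto simp: is_block_subalg_def)
  ultimately show "compose A F gs k \<in> {f \<in> ops A. top_ext A f \<in> B}"
    using top_ext_compose[OF gsops l kk, of f] Fe by simp
next
  fix n f b
  assume H: "(Suc n, f) \<in> {f \<in> ops A. top_ext A f \<in> B} \<and>
     (\<forall>xs\<in>tuples A n. \<forall>b\<in>A. \<forall>c\<in>A. f (xs @ [b]) = f (xs @ [c]))"
    and b: "b \<in> A"
  define r where "r = (\<lambda>xs. if xs \<in> tuples A n then f (xs @ [b]) else undefined)"
  have fo: "(Suc n, f) \<in> ops A" using H by simp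
  have app: "xs @ [c] \<in> tuples A (Suc n)" if "xs \<in> tuples A n" "c \<in> A" for xs c
    using that by (auto simp: tuples_def)
  have "(n, r) \<in> ops A" unfolding ops_def r_def using ops_mem[OF fo app] b by auto
  moreover have "top_ext A (n, r) = top_ext A (Suc n, f)"
  proof
    fix s show "top_ext A (n, r) s = top_ext A (Suc n, f) s"
    proof (cases "s \<in> seqs A")
      case False then show ?thesis by (simp add: top_ext_pair)
    next
      case True
      have t: "map s [0..<n] \<in> tuples A n" using map_seq_tuples[OF True] .
      have sn: "s n \<in> A" using True by (simp add: seqs_def)
      have "f (map s [0..<n] @ [b]) = f (map s [0..<n] @ [s n])" using H t b sn by blast
      then show ?thesis using True t by (simp add: top_ext_pair r_def)
    qed
  qed
  ultimately show "(n, \<lambda>xs. if xs \<in> tuples A n then f (xs @ [b]) else undefined)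
                   \<in> {f \<in> ops A. top_ext A f \<in> B}"
    using H unfolding r_def by simp
qed

theorem corollary6p17:
  fixes A :: "'a set"
  shows "\<exists>h. bij_betw h {C. is_clone A C} {B. is_block_subalg A B} \<and>
             (\<forall>C \<in> {C. is_clone A C}. \<forall>D \<in> {C. is_clone A C}. C \<subseteq> D \<longleftrightarrow> h C \<subseteq> h D)"
proof -
  define g where "g = (\<lambda>B. {f \<in> ops A. top_ext A f \<in> B})"
  have gh: "g (top_ext A ` C) = C" if C: "is_clone A C" for C
    using clone_ops[OF C] clone_closed[OF C] unfolding g_def by blast
  have hg: "top_ext A ` g B = B" if B: "is_block_subalg A B" for B
  proof
    show "top_ext A ` g B \<subseteq> B" unfolding g_def by auto
    show "B \<subseteq> top_ext A ` g B"
    proof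
      fix x assume "x \<in> B"
      then obtain f where "f \<in> ops A" "x = top_ext A f"
        using B by (auto simp: is_block_subalg_def block_univ_def)
      then show "x \<in> top_ext A ` g B" using \<open>x \<in> B\<close> unfolding g_def by auto
    qed
  qed
  have gc: "is_clone A (g B)" if "is_block_subalg A B" for B
    unfolding g_def using g_clone[OF that] .
  have bij: "bij_betw (image (top_ext A)) {C. is_clone A C} {B. is_block_subalg A B}"
    by (rule bij_betw_byWitness[where f' = g]) (auto simp: gh hg h_subalg gc)
  have mono: "C \<subseteq> D \<longleftrightarrow> top_ext A ` C \<subseteq> top_ext A ` D" if "is_clone A C" "is_clone A D" for C D
  proof
    assume "top_ext A ` C \<subseteq> top_ext A ` D"
    then have "g (top_ext A ` C) \<subseteq> g (top_ext A ` D)" unfolding g_def by auto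
    then show "C \<subseteq> D" using gh that by simp
  qed auto
  show ?thesis using bij mono by blast
qed

end
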